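(* Let $(m,n)$ be coprime positive integers, $\gamma\in D_{m,n}$, and let $\gamma^*\in D_{m+n,n}$ be obtained by inserting one horizontal unit step immediately after each vertical step of $\gamma$. Then \[ h(\gamma)=h(\gamma^* )-\sum_{p\in V(\gamma^* )}k(p). \]
   Context: For coprime positive $(m,n)$, an $(m,n)$-Dyck path is a lattice path from $(0,0)$ to $(m,n)$ of $m$ horizontal unit steps $(1,0)$ and $n$ vertical unit steps $(0,1)$ lying weakly above the diagonal $y=(n/m)x$; $D_{m,n}$ is the set of them. For a path in $D_{m,n}$ (resp. $D_{m+n,n}$), a parallel line is a line parallel to its diagonal $y=(n/m)x$ (resp. $y=(n/(m+n))x$), and $l(p)$ is the parallel line through $p$. $O(\gamma)$ is the set of pairs $(r_h,r_v)$ with $r_h$ a horizontal step and $r_v$ a vertical step of $\gamma$, $r_v$ appearing after $r_h$; $H(\gamma)$ is the set of pairs in $O(\gamma)$ for which some parallel line intersects both steps; $h(\gamma)=|H(\gamma)|$. An outer vertex is a lattice point of the path immediately after a vertical step and immediately before a horizontal step; for an outer vertex $p$, $k(p)$ is the number of horizontal steps of the path intersecting $l(p)$, not counting the two steps meeting at $p$. $p_0$ is the outer vertex farthest from the diagonal and $V(\cdot)$ is the set of outer vertices other than $p_0$. *)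

theory Defs
  imports "HOL-Analysis.Analysis"
begin

text \<open>A lattice path is a list of unit steps: True = vertical step (0,1),
  False = horizontal step (1,0).  Step i (0-indexed) goes from vertex i to vertex i+1.\<close>

definition vtx :: "bool list \<Rightarrow> nat \<Rightarrow> nat \<times> nat" where
  "vtx w i = (length (filter Not (take i w)), length (filter id (take i w)))"

definition rpt :: "nat \<times> nat \<Rightarrow> real \<times> real" where
  "rpt p = (real (fst p), real (snd p))"

definition is_horiz :: "bool list \<Rightarrow> nat \<Rightarrow> bool" where
  "is_horiz w i \<longleftrightarrow> i < length w \<and> \<not> w ! i"

definition is_vert :: "bool list \<Rightarrow> nat \<Rightarrow> bool" where
  "is_vert w i \<longleftrightarrow> i < length w \<and> w ! i"

definition step_seg :: "bool list \<Rightarrow> nat \<Rightarrow> (real \<times> real) set" where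
  "step_seg w i = closed_segment (rpt (vtx w i)) (rpt (vtx w (Suc i)))"

definition dyck :: "nat \<Rightarrow> nat \<Rightarrow> bool list set" where
  "dyck m n = {w. length (filter Not w) = m \<and> length (filter id w) = n \<and>
     (\<forall>i\<le>length w. real n * real (fst (vtx w i)) \<le> real m * real (snd (vtx w i)))}"

text \<open>Lines parallel to the diagonal y = (n/m) x: the sets m y - n x = c.\<close>
definition par_line :: "nat \<Rightarrow> nat \<Rightarrow> real \<Rightarrow> (real \<times> real) set" where
  "par_line m n c = {q. real m * snd q - real n * fst q = c}"

definition line_through :: "nat \<Rightarrow> nat \<Rightarrow> real \<times> real \<Rightarrow> (real \<times> real) set" where
  "line_through m n p = par_line m n (real m * snd p - real n * fst p)"

definition Hset :: "nat \<Rightarrow> nat \<Rightarrow> bool list \<Rightarrow> (nat \<times> nat) set" where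
  "Hset m n w = {(i, j). i < j \<and> is_horiz w i \<and> is_vert w j \<and>
     (\<exists>c. par_line m n c \<inter> step_seg w i \<noteq> {} \<and> par_line m n c \<inter> step_seg w j \<noteq> {})}"

definition hstat :: "nat \<Rightarrow> nat \<Rightarrow> bool list \<Rightarrow> nat" where
  "hstat m n w = card (Hset m n w)"

text \<open>Outer vertices, indexed by vertex position i: vertex i lies right after
  the vertical step i-1 and right before the horizontal step i.\<close>
definition outer :: "bool list \<Rightarrow> nat set" where
  "outer w = {i. 0 < i \<and> is_vert w (i - 1) \<and> is_horiz w i}"

definition kval :: "nat \<Rightarrow> nat \<Rightarrow> bool list \<Rightarrow> nat \<Rightarrow> nat" where
  "kval m n w i = card {j. is_horiz w j \<and> j \<noteq> i - 1 \<and> j \<noteq> i \<and>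
     line_through m n (rpt (vtx w i)) \<inter> step_seg w j \<noteq> {}}"

text \<open>Distance of vertex i from the diagonal (up to a positive constant factor).\<close>
definition dlevel :: "nat \<Rightarrow> nat \<Rightarrow> bool list \<Rightarrow> nat \<Rightarrow> real" where
  "dlevel m n w i = real m * real (snd (vtx w i)) - real n * real (fst (vtx w i))"

definition p0 :: "nat \<Rightarrow> nat \<Rightarrow> bool list \<Rightarrow> nat" where
  "p0 m n w = (ARG_MAX (dlevel m n w) i. i \<in> outer w)"

definition Vset :: "nat \<Rightarrow> nat \<Rightarrow> bool list \<Rightarrow> nat set" where
  "Vset m n w = outer w - {p0 m n w}"

definition star :: "bool list \<Rightarrow> bool list" where
  "star w = concat (map (\<lambda>b. if b then [True, False] else [False]) w)"

end

theory Submission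
  imports Defs
begin


definition lv :: "nat \<Rightarrow> nat \<Rightarrow> bool list \<Rightarrow> nat \<Rightarrow> int" where
  "lv a b w t = int a * int (snd (vtx w t)) - int b * int (fst (vtx w t))"

lemma vtx_Suc: "i < length w \<Longrightarrow> vtx w (Suc i) =
   (if w!i then (fst (vtx w i), Suc (snd (vtx w i))) else (Suc (fst (vtx w i)), snd (vtx w i)))"
  by (simp add: vtx_def take_Suc_conv_app_nth)

lemma vtx_0[simp]: "vtx w 0 = (0,0)" by (simp add: vtx_def)

lemma vtx_sum: "i \<le> length w \<Longrightarrow> fst (vtx w i) + snd (vtx w i) = i"
proof -
  assume "i \<le> length w"
  have "length (filter Not (take i w)) + length (filter id (take i w)) = length (take i w)"
    using sum_length_filter_compl[of id "take i w"] by (simp add: comp_def add.commute)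
  then show ?thesis using \<open>i \<le> length w\<close> by (simp add: vtx_def)
qed

lemma lv_Suc: "i < length w \<Longrightarrow> lv a b w (Suc i) = (if w!i then lv a b w i + int a else lv a b w i - int b)"
  by (simp add: lv_def vtx_Suc algebra_simps)

lemma seg_level:
  fixes a b c :: real and p q :: "real \<times> real"
  shows "(\<exists>z\<in>closed_segment p q. a * snd z - b * fst z = c) \<longleftrightarrow>
    (min (a * snd p - b * fst p) (a * snd q - b * fst q) \<le> c \<and> c \<le> max (a * snd p - b * fst p) (a * snd q - b * fst q))"
  (is "?L \<longleftrightarrow> ?R")
proof
  assume ?L
  then obtain z where z: "z \<in> closed_segment p q" "a * snd z - b * fst z = c" by blast
  obtain u where u: "0 \<le> u" "u \<le> 1" "z = (1 - u) *\<^sub>R p + u *\<^sub>R q"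
    using z(1) unfolding closed_segment_def by auto
  have c: "c = (1 - u) * (a * snd p - b * fst p) + u * (a * snd q - b * fst q)"
    using z(2) u(3) by (simp add: algebra_simps)
  define fp where "fp = a * snd p - b * fst p"
  define fq where "fq = a * snd q - b * fst q"
  have c': "c = (1 - u) * fp + u * fq" using c by (simp add: fp_def fq_def)
  have "min fp fq \<le> c \<and> c \<le> max fp fq"
  proof (cases "fp \<le> fq")
    case True
    have "(1-u)*fp + u*fp \<le> (1-u)*fp + u*fq" using u True by (simp add: mult_left_mono)
    moreover have "(1-u)*fp + u*fq \<le> (1-u)*fq + u*fq" using u True by (simp add: mult_left_mono)
    ultimately show ?thesis using True c' by (simp add: algebra_simps)
  next
    case False
    have "(1-u)*fp + u*fq \<le> (1-u)*fp + u*fp" using u False by (simp add: mult_left_mono)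
    moreover have "(1-u)*fq + u*fq \<le> (1-u)*fp + u*fq" using u False by (simp add: mult_left_mono)
    ultimately show ?thesis using False c' by (simp add: algebra_simps)
  qed
  then show ?R by (simp add: fp_def fq_def)
next
  assume ?R
  define fp where "fp = a * snd p - b * fst p"
  define fq where "fq = a * snd q - b * fst q"
  have R: "min fp fq \<le> c" "c \<le> max fp fq" using \<open>?R\<close> by (auto simp: fp_def fq_def)
  show ?L
  proof (cases "fp = fq")
    case True
    then have "c = fp" using R by auto
    then show ?thesis by (intro bexI[of _ p]) (auto simp: fp_def)
  next
    case False
    define u where "u = (c - fp) / (fq - fp)"
    have u: "0 \<le> u" "u \<le> 1" using R False
      by (auto simp: u_def divide_simps min_def max_def split: if_splits)
    have ne: "fq - fp \<noteq> 0" using False by simp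
    have e1: "u * (fq - fp) = c - fp" using ne by (simp add: u_def)
    have "(1 - u) * fp + u * fq = fp + u * (fq - fp)" by (simp add: algebra_simps)
    then have "(1 - u) * fp + u * fq = c" using e1 by simp
    then have "a * snd ((1 - u) *\<^sub>R p + u *\<^sub>R q) - b * fst ((1 - u) *\<^sub>R p + u *\<^sub>R q) = c"
      by (simp add: fp_def fq_def algebra_simps)
    moreover have "(1 - u) *\<^sub>R p + u *\<^sub>R q \<in> closed_segment p q"
      using u unfolding closed_segment_def by blast
    ultimately show ?thesis by blast
  qed
qed

lemma par_seg: "par_line a b c \<inter> step_seg w i \<noteq> {} \<longleftrightarrow>
   (min (real_of_int (lv a b w i)) (lv a b w (Suc i)) \<le> c \<and> c \<le> max (real_of_int (lv a b w i)) (lv a b w (Suc i)))"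
  (is "?A \<longleftrightarrow> ?B")
proof -
  have "par_line a b c \<inter> step_seg w i \<noteq> {} \<longleftrightarrow>
     (\<exists>z\<in>closed_segment (rpt (vtx w i)) (rpt (vtx w (Suc i))). real a * snd z - real b * fst z = c)"
    by (auto simp: par_line_def step_seg_def)
  also have "\<dots> \<longleftrightarrow> ?B" by (subst seg_level) (simp add: lv_def rpt_def)
  finally show ?thesis .
qed

lemma Hset_lv: "Hset a b w = {(i,j). i<j \<and> is_horiz w i \<and> is_vert w j \<and>
   lv a b w j \<le> lv a b w i \<and> lv a b w i \<le> lv a b w j + int a + int b}"
proof -
  have "(\<exists>c. par_line a b c \<inter> step_seg w i \<noteq> {} \<and> par_line a b c \<inter> step_seg w j \<noteq> {})
     \<longleftrightarrow> (lv a b w j \<le> lv a b w i \<and> lv a b w i \<le> lv a b w j + int a + int b)"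
    if h: "is_horiz w i" and v: "is_vert w j" for i j
  proof -
    have li: "lv a b w (Suc i) = lv a b w i - int b" using h by (simp add: is_horiz_def lv_Suc)
    have lj: "lv a b w (Suc j) = lv a b w j + int a" using v by (simp add: is_vert_def lv_Suc)
    have "(\<exists>c. par_line a b c \<inter> step_seg w i \<noteq> {} \<and> par_line a b c \<inter> step_seg w j \<noteq> {})
      \<longleftrightarrow> (\<exists>c::real. real_of_int (lv a b w i) - b \<le> c \<and> c \<le> lv a b w i \<and> lv a b w j \<le> c \<and> c \<le> real_of_int (lv a b w j) + a)"
      unfolding par_seg li lj by (simp add: min_def max_def)
    also have "\<dots> \<longleftrightarrow> (lv a b w j \<le> lv a b w i \<and> lv a b w i \<le> lv a b w j + int a + int b)"
    proof
      assume "\<exists>c::real. real_of_int (lv a b w i) - b \<le> c \<and> c \<le> lv a b w i \<and> lv a b w j \<le> c \<and> c \<le> real_of_int (lv a b w j) + a"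
      then obtain c :: real where "real_of_int (lv a b w i) - b \<le> c" "c \<le> lv a b w i" "lv a b w j \<le> c" "c \<le> real_of_int (lv a b w j) + a"
        by blast
      then have "real_of_int (lv a b w j) \<le> lv a b w i \<and> real_of_int (lv a b w i) \<le> real_of_int (lv a b w j) + a + b" by linarith
      then show "lv a b w j \<le> lv a b w i \<and> lv a b w i \<le> lv a b w j + int a + int b" by linarith
    next
      assume H: "lv a b w j \<le> lv a b w i \<and> lv a b w i \<le> lv a b w j + int a + int b"
      show "\<exists>c::real. real_of_int (lv a b w i) - b \<le> c \<and> c \<le> lv a b w i \<and> lv a b w j \<le> c \<and> c \<le> real_of_int (lv a b w j) + a"
        by (rule exI[of _ "real_of_int (max (lv a b w i - int b) (lv a b w j))"]) (use H in auto)
    qed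
    finally show ?thesis .
  qed
  then show ?thesis unfolding Hset_def by auto
qed

lemma kval_lv: "kval a b w p = card {j. is_horiz w j \<and> j \<noteq> p - 1 \<and> j \<noteq> p \<and>
    lv a b w j - int b \<le> lv a b w p \<and> lv a b w p \<le> lv a b w j}"
proof -
  have lt: "line_through a b (rpt (vtx w p)) = par_line a b (real_of_int (lv a b w p))"
    by (simp add: line_through_def lv_def rpt_def)
  have "line_through a b (rpt (vtx w p)) \<inter> step_seg w j \<noteq> {} \<longleftrightarrow>
      (lv a b w j - int b \<le> lv a b w p \<and> lv a b w p \<le> lv a b w j)" if h: "is_horiz w j" for j
  proof -
    have lj: "lv a b w (Suc j) = lv a b w j - int b" using h by (simp add: is_horiz_def lv_Suc)
    have aux: "(real_of_int x - real b \<le> real_of_int y) = (x - int b \<le> y)" for x y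
      by (metis of_int_diff of_int_le_iff of_int_of_nat_eq)
    show ?thesis unfolding lt par_seg lj by (simp add: min_def max_def aux)
  qed
  then show ?thesis unfolding kval_def by (intro arg_cong[where f=card]) auto
qed

lemma crossing_aux:
  fixes f :: "nat \<Rightarrow> int"
  shows "(\<forall>t. s \<le> t \<and> t \<le> s + d \<longrightarrow> f t \<noteq> X) \<Longrightarrow>
    card {t\<in>{s..<s+d}. f t < X \<and> X < f (Suc t)} + (if X < f s then 1 else 0) =
         card {t\<in>{s..<s+d}. f (Suc t) < X \<and> X < f t} + (if X < f (s+d) then 1 else 0)"
proof (induction d)
  case 0
  then show ?case by simp
next
  case (Suc d)
  have ih: "card {t\<in>{s..<s+d}. f t < X \<and> X < f (Suc t)} + (if X < f s then 1 else 0) =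
         card {t\<in>{s..<s+d}. f (Suc t) < X \<and> X < f t} + (if X < f (s+d) then 1 else 0)"
    using Suc by auto
  have ne1: "f (s+d) \<noteq> X" "f (Suc (s+d)) \<noteq> X" using Suc(2) by auto
  have e1: "{t\<in>{s..<s + Suc d}. P t} = (if P (s+d) then insert (s+d) {t\<in>{s..<s+d}. P t} else {t\<in>{s..<s+d}. P t})" for P
    by (auto simp: less_Suc_eq)
  show ?case unfolding e1[of "\<lambda>t. f t < X \<and> X < f (Suc t)"] e1[of "\<lambda>t. f (Suc t) < X \<and> X < f t"]
    using ih ne1 by (auto split: if_splits)
qed

lemma crossing:
  fixes f :: "nat \<Rightarrow> int"
  assumes "s \<le> e" and "\<forall>t. s \<le> t \<and> t \<le> e \<longrightarrow> f t \<noteq> X"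
  shows "card {t\<in>{s..<e}. f t < X \<and> X < f (Suc t)} + (if X < f s then 1 else 0) =
         card {t\<in>{s..<e}. f (Suc t) < X \<and> X < f t} + (if X < f e then 1 else 0)"
  using crossing_aux[of s "e - s" f X] assms by simp

lemma star_append[simp]: "star (xs @ ys) = star xs @ star ys" by (simp add: star_def)
lemma star_Cons[simp]: "star (b # xs) = (if b then [True, False] else [False]) @ star xs" by (simp add: star_def)
lemma star_Nil[simp]: "star [] = []" by (simp add: star_def)
lemma len_star: "length (star xs) = length xs + length (filter id xs)" by (induction xs) auto
lemma fNot_star: "length (filter Not (star xs)) = length xs" by (induction xs) auto
lemma fid_star: "length (filter id (star xs)) = length (filter id xs)" by (induction xs) auto

definition pos :: "bool list \<Rightarrow> nat \<Rightarrow> nat" where "pos w t = t + snd (vtx w t)"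

lemma len_star_take: "t \<le> length w \<Longrightarrow> length (star (take t w)) = pos w t"
  by (simp add: len_star pos_def vtx_def)

lemma star_split: "star w = star (take t w) @ star (drop t w)"
  by (metis append_take_drop_id star_append)

lemma take_star: "t \<le> length w \<Longrightarrow> take (pos w t) (star w) = star (take t w)"
  by (subst star_split[of w t]) (simp add: len_star_take[symmetric])

lemma vtx_star_pos: "t \<le> length w \<Longrightarrow> vtx (star w) (pos w t) = (t, snd (vtx w t))"
  by (simp add: vtx_def take_star fNot_star fid_star)

lemma star_nth_plus: "t \<le> length w \<Longrightarrow> star w ! (pos w t + i) = star (drop t w) ! i"
  by (subst star_split[of w t]) (simp add: len_star_take[symmetric] nth_append)

lemma star_nth_pos: "t < length w \<Longrightarrow> star w ! pos w t = w ! t"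
  using star_nth_plus[of t w 0] by (simp add: Cons_nth_drop_Suc[symmetric])

lemma star_nth_pos1: "t < length w \<Longrightarrow> w ! t \<Longrightarrow> star w ! (pos w t + 1) = False"
  using star_nth_plus[of t w 1] by (simp add: Cons_nth_drop_Suc[symmetric])

lemma vtx_star_pos1: assumes "t < length w" "w ! t"
  shows "vtx (star w) (pos w t + 1) = (t, Suc (snd (vtx w t)))"
proof -
  have "star w = star (take t w) @ [True, False] @ star (drop (Suc t) w)"
    using star_split[of w t] assms by (simp add: Cons_nth_drop_Suc[symmetric])
  then have "take (pos w t + 1) (star w) = star (take t w) @ [True]"
    using len_star_take[of t w] assms by simp
  then show ?thesis using assms by (simp add: vtx_def fNot_star fid_star)
qed

lemma pos_Suc: "t < length w \<Longrightarrow> pos w (Suc t) = pos w t + (if w ! t then 2 else 1)"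
  by (simp add: pos_def vtx_Suc)

lemma pos_len: "pos w (length w) = length (star w)"
  by (simp add: pos_def vtx_def len_star)

lemma snd_vtx_mono: "t \<le> t' \<Longrightarrow> snd (vtx w t) \<le> snd (vtx w t')"
proof -
  assume "t \<le> t'"
  then have "take t' w = take t w @ take (t' - t) (drop t w)"
    by (metis le_add_diff_inverse take_add)
  then show ?thesis by (simp add: vtx_def)
qed

lemma pos_mono: "t < t' \<Longrightarrow> pos w t < pos w t'"
  using snd_vtx_mono[of t t' w] by (simp add: pos_def)

lemma pos_mono_le: "t \<le> t' \<Longrightarrow> pos w t \<le> pos w t'"
  using snd_vtx_mono[of t t' w] by (simp add: pos_def)

lemma pos1_lt: "t < t' \<Longrightarrow> t < length w \<Longrightarrow> w ! t \<Longrightarrow> pos w t + 1 < pos w t'"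
  using pos_mono_le[of "Suc t" t' w] pos_Suc[of t w] by simp

lemma pos_inj: "pos w t = pos w t' \<Longrightarrow> t = t'"
  using pos_mono[of t t' w] pos_mono[of t' t w] by (cases "t < t'"; cases "t' < t") auto

lemma pos1_ne: "t < length w \<Longrightarrow> w ! t \<Longrightarrow> pos w t + 1 \<noteq> pos w t'"
  using pos1_lt[of t t' w] pos_mono_le[of t' t w] by (cases "t < t'") auto

lemma pos_surj_aux: "t \<le> length w \<Longrightarrow> s < pos w t \<Longrightarrow>
   (\<exists>i<t. s = pos w i) \<or> (\<exists>i<t. w ! i \<and> s = pos w i + 1)"
proof (induction t)
  case 0
  then show ?case by (simp add: pos_def)
next
  case (Suc t)
  have p: "pos w (Suc t) = pos w t + (if w ! t then 2 else 1)" using Suc pos_Suc by simp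
  show ?case
  proof (cases "s < pos w t")
    case True
    then have IH: "(\<exists>i<t. s = pos w i) \<or> (\<exists>i<t. w ! i \<and> s = pos w i + 1)" using Suc by simp
    then show ?thesis using less_SucI by blast
  next
    case False
    then have "s = pos w t \<or> (w ! t \<and> s = pos w t + 1)" using Suc(3) p by (auto split: if_splits)
    then show ?thesis by blast
  qed
qed

lemma star_horiz: "is_horiz (star w) s \<longleftrightarrow>
   (\<exists>i. is_horiz w i \<and> s = pos w i) \<or> (\<exists>k. is_vert w k \<and> s = pos w k + 1)"
proof
  assume h: "is_horiz (star w) s"
  then have "s < pos w (length w)" by (simp add: is_horiz_def pos_len)
  then have "(\<exists>i<length w. s = pos w i) \<or> (\<exists>i<length w. w ! i \<and> s = pos w i + 1)"
    using pos_surj_aux by blast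
  then show "(\<exists>i. is_horiz w i \<and> s = pos w i) \<or> (\<exists>k. is_vert w k \<and> s = pos w k + 1)"
  proof
    assume "\<exists>i<length w. s = pos w i"
    then obtain i where i: "i < length w" "s = pos w i" by blast
    have "\<not> w ! i" using h i star_nth_pos[of i w] by (simp add: is_horiz_def)
    then show ?thesis using i by (auto simp: is_horiz_def)
  next
    assume "\<exists>i<length w. w ! i \<and> s = pos w i + 1"
    then obtain i where i: "i < length w" "w ! i" "s = pos w i + 1" by blast
    then show ?thesis by (auto simp: is_vert_def)
  qed
next
  assume "(\<exists>i. is_horiz w i \<and> s = pos w i) \<or> (\<exists>k. is_vert w k \<and> s = pos w k + 1)"
  then show "is_horiz (star w) s"
  proof
    assume "\<exists>i. is_horiz w i \<and> s = pos w i"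
    then obtain i where i: "i < length w" "\<not> w ! i" "s = pos w i" by (auto simp: is_horiz_def)
    have "pos w i < pos w (length w)" using pos_mono[OF i(1)] .
    then have "pos w i < length (star w)" by (simp only: pos_len)
    then show ?thesis using i star_nth_pos[of i w] by (simp add: is_horiz_def)
  next
    assume "\<exists>k. is_vert w k \<and> s = pos w k + 1"
    then obtain i where i: "i < length w" "w ! i" "s = pos w i + 1" by (auto simp: is_vert_def)
    have ps: "pos w (Suc i) = pos w i + 2" using pos_Suc[of i w] i by simp
    have "pos w (Suc i) \<le> pos w (length w)" using pos_mono_le[of "Suc i" "length w" w] i by simp
    then have "pos w i + 1 < length (star w)" using ps by (simp add: pos_len)
    then show ?thesis using i star_nth_pos1[of i w] by (simp add: is_horiz_def)
  qed
qed

lemma star_vert: "is_vert (star w) s \<longleftrightarrow> (\<exists>j. is_vert w j \<and> s = pos w j)"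
proof
  assume h: "is_vert (star w) s"
  then have "s < pos w (length w)" by (simp add: is_vert_def pos_len)
  then have "(\<exists>i<length w. s = pos w i) \<or> (\<exists>i<length w. w ! i \<and> s = pos w i + 1)"
    using pos_surj_aux by blast
  then show "\<exists>j. is_vert w j \<and> s = pos w j"
  proof
    assume "\<exists>i<length w. s = pos w i"
    then obtain i where i: "i < length w" "s = pos w i" by blast
    have "w ! i" using h i star_nth_pos[of i w] by (simp add: is_vert_def)
    then show ?thesis using i by (auto simp: is_vert_def)
  next
    assume "\<exists>i<length w. w ! i \<and> s = pos w i + 1"
    then obtain i where i: "i < length w" "w ! i" "s = pos w i + 1" by blast
    then show ?thesis using h star_nth_pos1[of i w] by (simp add: is_vert_def)
  qed
next
  assume "\<exists>j. is_vert w j \<and> s = pos w j"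
  then obtain i where i: "i < length w" "w ! i" "s = pos w i" by (auto simp: is_vert_def)
  have "pos w i < pos w (length w)" using pos_mono[OF i(1)] .
  then have "pos w i < length (star w)" by (simp only: pos_len)
  then show "is_vert (star w) s" using i star_nth_pos by (simp add: is_vert_def)
qed

lemma lv_star_pos: assumes "t \<le> length w" shows "lv (m + n) n (star w) (pos w t) = lv m n w t"
proof -
  have it: "int t = int (fst (vtx w t)) + int (snd (vtx w t))" using vtx_sum[OF assms] by linarith
  show ?thesis unfolding lv_def vtx_star_pos[OF assms] by (simp add: it algebra_simps)
qed

lemma lv_star_pos1: assumes "t < length w" "w ! t" shows
   "lv (m + n) n (star w) (pos w t + 1) = lv m n w t + int m + int n"
proof -
  have it: "int t = int (fst (vtx w t)) + int (snd (vtx w t))" using vtx_sum[of t w] assms by linarith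
  show ?thesis unfolding lv_def vtx_star_pos1[OF assms] by (simp add: it algebra_simps)
qed



lemma cop: "coprime m (n::nat) \<Longrightarrow> coprime (int (m + n)) (int n)"
  by (simp add: coprime_iff_gcd_eq_1)

lemma dvd_small: fixes d N :: int assumes "N dvd d" "-N < d" "d < N" shows "d = 0"
  by (smt (verit, del_insts) assms(1,2,3) dvd_minus_iff zdvd_not_zless)

context
  fixes m n :: nat and g :: "bool list"
  assumes mpos: "0 < m" and npos: "0 < n" and cp: "coprime m n" and dy: "g \<in> dyck m n"
begin

abbreviation L where "L \<equiv> lv m n g"

lemma lenm: "length (filter Not g) = m" and lenn: "length (filter id g) = n"
  using dy by (auto simp: dyck_def)

lemma len: "length g = m + n"
proof -
  have "length (filter id g) + length (filter (\<lambda>x. \<not> id x) g) = length g" by (rule sum_length_filter_compl)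
  then show ?thesis using lenm lenn by simp
qed

lemma L_nonneg: "t \<le> length g \<Longrightarrow> 0 \<le> L t"
proof -
  assume "t \<le> length g"
  then have "real n * real (fst (vtx g t)) \<le> real m * real (snd (vtx g t))" using dy by (auto simp: dyck_def)
  then have "real_of_int (int n * int (fst (vtx g t))) \<le> real_of_int (int m * int (snd (vtx g t)))" by simp
  then have "int n * int (fst (vtx g t)) \<le> int m * int (snd (vtx g t))" by (simp only: of_int_le_iff)
  then show ?thesis by (simp add: lv_def)
qed

lemma L0: "L 0 = 0" by (simp add: lv_def)

lemma LN: "L (length g) = 0"
  by (simp add: lv_def vtx_def lenm lenn)

lemma L_form: "t \<le> length g \<Longrightarrow> L t = int (m + n) * int (snd (vtx g t)) - int n * int t"
proof -
  assume "t \<le> length g"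
  then have it: "int t = int (fst (vtx g t)) + int (snd (vtx g t))" using vtx_sum[of t g] by linarith
  show ?thesis by (simp add: lv_def it algebra_simps)
qed

lemma L_diff_dvd: "t \<le> length g \<Longrightarrow> t' \<le> length g \<Longrightarrow> L t - L t' = c * int (m + n) \<Longrightarrow>
    int (m + n) dvd (int t - int t')"
proof -
  assume a: "t \<le> length g" "t' \<le> length g" "L t - L t' = c * int (m + n)"
  then have "int n * (int t - int t') = int (m + n) * (int (snd (vtx g t)) - int (snd (vtx g t')) - c)"
    using L_form[OF a(1)] L_form[OF a(2)] by (simp add: algebra_simps)
  then have "int (m + n) dvd int n * (int t - int t')" by simp
  moreover have "coprime (int (m + n)) (int n)" using cop[OF cp] .
  ultimately show ?thesis using coprime_dvd_mult_right_iff by blast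
qed

lemma F1: "t < length g \<Longrightarrow> t' < length g \<Longrightarrow> L t = L t' \<Longrightarrow> t = t'"
proof -
  assume a: "t < length g" "t' < length g" "L t = L t'"
  then have d: "int (m + n) dvd (int t - int t')" using L_diff_dvd[of t t' 0] by simp
  have b1: "- int (m + n) < int t - int t'" using a(2) len by linarith
  have b2: "int t - int t' < int (m + n)" using a(1) len by linarith
  have "int t - int t' = 0" using dvd_small[OF d b1 b2] .
  then show ?thesis by simp
qed

lemma F2: "t \<le> length g \<Longrightarrow> k < length g \<Longrightarrow> L t \<noteq> L k + int (m + n)"
proof
  assume a: "t \<le> length g" "k < length g" "L t = L k + int (m + n)"
  then have d: "int (m + n) dvd (int t - int k)" using L_diff_dvd[of t k 1] by simp
  show False
  proof (cases "t = length g \<and> k = 0")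
    case True
    then show ?thesis using a LN L0 mpos by simp
  next
    case False
    have b1: "- int (m + n) < int t - int k" using a(2) len by linarith
    have "int t - int k \<le> int (m + n)" using a(1) len by linarith
    moreover have "int t - int k \<noteq> int (m + n)"
    proof
      assume "int t - int k = int (m + n)"
      then have "t = length g" "k = 0" using a(1) len by linarith+
      then show False using False by simp
    qed
    ultimately have b2: "int t - int k < int (m + n)" by linarith
    have "int t - int k = 0" using dvd_small[OF d b1 b2] .
    then have "t = k" by simp
    then show False using a(3) mpos by simp
  qed
qed

lemma L_SucU: "is_vert g t \<Longrightarrow> L (Suc t) = L t + int m"
  by (simp add: is_vert_def lv_Suc)
lemma L_SucD: "is_horiz g t \<Longrightarrow> L (Suc t) = L t - int n"
  by (simp add: is_horiz_def lv_Suc)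

abbreviation LS where "LS \<equiv> lv (m + n) n (star g)"

lemma horiz_lt: "is_horiz g i \<Longrightarrow> i < length g" by (simp add: is_horiz_def)
lemma vert_lt: "is_vert g i \<Longrightarrow> i < length g" by (simp add: is_vert_def)

lemma LSp: "t \<le> length g \<Longrightarrow> LS (pos g t) = L t"
  by (rule lv_star_pos)

lemma LSp1: "is_vert g k \<Longrightarrow> LS (pos g k + 1) = L k + int m + int n"
  by (rule lv_star_pos1) (auto simp: is_vert_def)

definition "AA = {(i,j). i<j \<and> is_horiz g i \<and> is_vert g j \<and> L j \<le> L i \<and> L i \<le> L j + int m + 2 * int n}"
definition "BB = {(k,j). k<j \<and> is_vert g k \<and> is_vert g j \<and> L j \<le> L k + int m + int n \<and> L k + int m + int n \<le> L j + int m + 2 * int n}"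

lemma pos_lt_iff: "pos g i < pos g j \<longleftrightarrow> i < j"
  using pos_mono[of i j g] pos_mono_le[of j i g] by (cases "i < j") auto

lemma pos1_lt_iff: "is_vert g k \<Longrightarrow> pos g k + 1 < pos g j \<longleftrightarrow> k < j"
  using pos1_lt[of k j g] pos_mono_le[of j k g] by (cases "k < j") (auto simp: is_vert_def)

lemma Hset_star: "Hset (m + n) n (star g) =
   (\<lambda>(i,j). (pos g i, pos g j)) ` AA \<union> (\<lambda>(k,j). (pos g k + 1, pos g j)) ` BB"
proof (rule set_eqI, rule iffI)
  fix x assume x: "x \<in> Hset (m + n) n (star g)"
  obtain s s' where xs: "x = (s, s')" by (cases x)
  have h: "s < s'" "is_horiz (star g) s" "is_vert (star g) s'" "LS s' \<le> LS s" "LS s \<le> LS s' + int (m + n) + int n"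
    using x unfolding xs Hset_lv by auto
  obtain j where j: "is_vert g j" "s' = pos g j" using h(3) star_vert by blast
  have Lj: "LS s' = L j" using j LSp[of j] by (simp add: is_vert_def)
  from h(2)[unfolded star_horiz] show "x \<in> (\<lambda>(i,j). (pos g i, pos g j)) ` AA \<union> (\<lambda>(k,j). (pos g k + 1, pos g j)) ` BB"
  proof
    assume "\<exists>i. is_horiz g i \<and> s = pos g i"
    then obtain i where i: "is_horiz g i" "s = pos g i" by blast
    have Li: "LS s = L i" using i LSp[of i] by (simp add: is_horiz_def)
    have "i < j" using h(1) i j pos_lt_iff by simp
    then have "(i, j) \<in> AA" using h Li Lj i j by (auto simp: AA_def)
    then show ?thesis using xs i j by (intro UnI1) (auto intro!: image_eqI[of _ _ "(i,j)"])
  next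
    assume "\<exists>k. is_vert g k \<and> s = pos g k + 1"
    then obtain k where k: "is_vert g k" "s = pos g k + 1" by blast
    have Lk: "LS s = L k + int m + int n" using k LSp1 by simp
    have "k < j" using h(1) k j pos1_lt_iff by simp
    then have "(k, j) \<in> BB" using h Lk Lj k j by (auto simp: BB_def)
    then show ?thesis using xs k j by (intro UnI2) (auto intro!: image_eqI[of _ _ "(k,j)"])
  qed
next
  fix x assume "x \<in> (\<lambda>(i,j). (pos g i, pos g j)) ` AA \<union> (\<lambda>(k,j). (pos g k + 1, pos g j)) ` BB"
  then show "x \<in> Hset (m + n) n (star g)"
  proof
    assume "x \<in> (\<lambda>(i,j). (pos g i, pos g j)) ` AA"
    then obtain i j where ij: "(i,j) \<in> AA" "x = (pos g i, pos g j)" by auto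
    have a: "i < j" "is_horiz g i" "is_vert g j" "L j \<le> L i" "L i \<le> L j + int m + 2 * int n"
      using ij by (auto simp: AA_def)
    have "LS (pos g i) = L i" "LS (pos g j) = L j" using a LSp by (auto simp: is_horiz_def is_vert_def)
    moreover have "is_horiz (star g) (pos g i)" "is_vert (star g) (pos g j)"
      using a star_horiz star_vert by auto
    ultimately show ?thesis using a ij pos_lt_iff unfolding Hset_lv by auto
  next
    assume "x \<in> (\<lambda>(k,j). (pos g k + 1, pos g j)) ` BB"
    then obtain k j where ij: "(k,j) \<in> BB" "x = (pos g k + 1, pos g j)" by auto
    have a: "k < j" "is_vert g k" "is_vert g j" "L j \<le> L k + int m + int n" "L k + int m + int n \<le> L j + int m + 2 * int n"
      using ij by (auto simp: BB_def)
    have "LS (pos g k + 1) = L k + int m + int n" "LS (pos g j) = L j" using a LSp LSp1 by (auto simp: is_vert_def)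
    moreover have "is_horiz (star g) (pos g k + 1)" "is_vert (star g) (pos g j)"
      using a star_horiz star_vert by auto
    moreover have "pos g k + 1 < pos g j" using a pos1_lt_iff by simp
    ultimately show ?thesis using a ij unfolding Hset_lv by auto
  qed
qed

lemma fin_pairs: "finite {(i,j). i < length g \<and> j < length g}"
proof -
  have "{(i,j). i < length g \<and> j < length g} = {..<length g} \<times> {..<length g}" by auto
  then show ?thesis by simp
qed

lemma finAA: "finite AA"
  by (rule finite_subset[OF _ fin_pairs]) (auto simp: AA_def is_horiz_def is_vert_def)
lemma finBB: "finite BB"
  by (rule finite_subset[OF _ fin_pairs]) (auto simp: BB_def is_horiz_def is_vert_def)

lemma hS: "hstat (m + n) n (star g) = card AA + card BB"
proof -
  have inj1: "inj_on (\<lambda>(i,j). (pos g i, pos g j)) AA"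
  proof (rule inj_onI)
    fix a b assume "a \<in> AA" "b \<in> AA" "(\<lambda>(i,j). (pos g i, pos g j)) a = (\<lambda>(i,j). (pos g i, pos g j)) b"
    then show "a = b" using pos_inj[of g] by (cases a; cases b) auto
  qed
  have inj2: "inj_on (\<lambda>(k,j). (pos g k + 1, pos g j)) BB"
  proof (rule inj_onI)
    fix a b assume "a \<in> BB" "b \<in> BB" "(\<lambda>(k,j). (pos g k + 1, pos g j)) a = (\<lambda>(k,j). (pos g k + 1, pos g j)) b"
    then show "a = b" using pos_inj[of g] by (cases a; cases b) auto
  qed
  have pw: "(\<lambda>(i,j). (pos g i, pos g j)) a \<noteq> (\<lambda>(k,j). (pos g k + 1, pos g j)) b" if "b \<in> BB" for a b
  proof -
    obtain i j where a: "a = (i,j)" by (cases a)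
    obtain k j' where b1: "b = (k,j')" by (cases b)
    then have b: "b = (k,j')" "is_vert g k" using that by (auto simp: BB_def)
    show ?thesis using pos1_ne[of k g i] b a by (auto simp: is_vert_def)
  qed
  have disj: "(\<lambda>(i,j). (pos g i, pos g j)) ` AA \<inter> (\<lambda>(k,j). (pos g k + 1, pos g j)) ` BB = {}"
    using pw by blast
  show ?thesis unfolding hstat_def Hset_star
    using card_Un_disjoint[OF finite_imageI[OF finAA] finite_imageI[OF finBB] disj]
      card_image[OF inj1] card_image[OF inj2] by simp
qed

definition "S1 k = {i. is_horiz g i \<and> L i - int n \<le> L k + int m + int n \<and> L k + int m + int n \<le> L i}"
definition "S2 k = {k'. is_vert g k' \<and> k' \<noteq> k \<and> L k' + int m \<le> L k + int m + int n \<and> L k + int m + int n \<le> L k' + int m + int n}"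

lemma finS1: "finite (S1 k)"
  by (rule finite_subset[of _ "{..<length g}"]) (auto simp: S1_def is_horiz_def)
lemma finS2: "finite (S2 k)"
  by (rule finite_subset[of _ "{..<length g}"]) (auto simp: S2_def is_vert_def)

lemma hv_excl: "is_horiz g i \<Longrightarrow> is_vert g i \<Longrightarrow> False"
  by (simp add: is_horiz_def is_vert_def)

lemma kval_star: assumes k: "is_vert g k"
  shows "kval (m + n) n (star g) (pos g k + 1) = card (S1 k) + card (S2 k)"
proof -
  have klt: "k < length g" "g ! k" using k by (auto simp: is_vert_def)
  have X: "LS (pos g k + 1) = L k + int m + int n" using LSp1[OF k] .
  have eq: "{j. is_horiz (star g) j \<and> j \<noteq> pos g k + 1 - 1 \<and> j \<noteq> pos g k + 1 \<and>
      LS j - int n \<le> LS (pos g k + 1) \<and> LS (pos g k + 1) \<le> LS j}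
     = pos g ` S1 k \<union> (\<lambda>k'. pos g k' + 1) ` S2 k"
  proof (rule set_eqI, rule iffI)
    fix j assume "j \<in> {j. is_horiz (star g) j \<and> j \<noteq> pos g k + 1 - 1 \<and> j \<noteq> pos g k + 1 \<and>
      LS j - int n \<le> LS (pos g k + 1) \<and> LS (pos g k + 1) \<le> LS j}"
    then have j: "is_horiz (star g) j" "j \<noteq> pos g k" "j \<noteq> pos g k + 1"
      "LS j - int n \<le> L k + int m + int n" "L k + int m + int n \<le> LS j" using X by auto
    from j(1)[unfolded star_horiz] show "j \<in> pos g ` S1 k \<union> (\<lambda>k'. pos g k' + 1) ` S2 k"
    proof
      assume "\<exists>i. is_horiz g i \<and> j = pos g i"
      then obtain i where i: "is_horiz g i" "j = pos g i" by blast
      have "LS j = L i" using i LSp[of i] by (simp add: is_horiz_def)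
      then have "i \<in> S1 k" using i j by (simp add: S1_def)
      then show ?thesis using i by blast
    next
      assume "\<exists>k'. is_vert g k' \<and> j = pos g k' + 1"
      then obtain k' where i: "is_vert g k'" "j = pos g k' + 1" by blast
      have "LS j = L k' + int m + int n" using i LSp1 by simp
      moreover have "k' \<noteq> k" using i j(3) by auto
      ultimately have "k' \<in> S2 k" using i j by (simp add: S2_def)
      then show ?thesis using i by blast
    qed
  next
    fix j assume "j \<in> pos g ` S1 k \<union> (\<lambda>k'. pos g k' + 1) ` S2 k"
    then show "j \<in> {j. is_horiz (star g) j \<and> j \<noteq> pos g k + 1 - 1 \<and> j \<noteq> pos g k + 1 \<and>
      LS j - int n \<le> LS (pos g k + 1) \<and> LS (pos g k + 1) \<le> LS j}"
    proof
      assume "j \<in> pos g ` S1 k"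
      then obtain i where i: "i \<in> S1 k" "j = pos g i" by blast
      have ih: "is_horiz g i" using i by (simp add: S1_def)
      have Li: "LS j = L i" using i ih LSp[of i] by (simp add: is_horiz_def)
      have "i \<noteq> k" using ih k hv_excl by blast
      then have "j \<noteq> pos g k" using i pos_inj by blast
      moreover have "j \<noteq> pos g k + 1" using pos1_ne[OF klt, of i] i by simp
      moreover have "is_horiz (star g) j" using ih i star_horiz by blast
      ultimately show ?thesis using Li X i by (simp add: S1_def)
    next
      assume "j \<in> (\<lambda>k'. pos g k' + 1) ` S2 k"
      then obtain k' where i: "k' \<in> S2 k" "j = pos g k' + 1" by blast
      have ih: "is_vert g k'" "k' \<noteq> k" using i by (auto simp: S2_def)
      have Li: "LS j = L k' + int m + int n" using i ih LSp1 by simp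
      have "j \<noteq> pos g k + 1" using i ih pos_inj by (metis add_right_cancel)
      moreover have "j \<noteq> pos g k" using pos1_ne[of k' g k] ih i by (simp add: is_vert_def)
      moreover have "is_horiz (star g) j" using ih i star_horiz by blast
      ultimately show ?thesis using Li X i by (simp add: S2_def)
    qed
  qed
  have inj1: "inj_on (pos g) (S1 k)" by (rule inj_onI) (rule pos_inj)
  have inj2: "inj_on (\<lambda>k'. pos g k' + 1) (S2 k)" by (rule inj_onI) (rule pos_inj, simp)
  have disj: "pos g ` S1 k \<inter> (\<lambda>k'. pos g k' + 1) ` S2 k = {}"
  proof -
    have "pos g i \<noteq> pos g k' + 1" if "k' \<in> S2 k" for i k'
      using that pos1_ne[of k' g i] by (simp add: S2_def is_vert_def)
    then show ?thesis by blast
  qed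
  show ?thesis unfolding kval_lv eq
    using card_Un_disjoint[OF finite_imageI[OF finS1] finite_imageI[OF finS2] disj]
      card_image[OF inj1] card_image[OF inj2] by simp
qed

lemma outer_star: "outer (star g) = (\<lambda>k. pos g k + 1) ` {k. is_vert g k}"
proof (rule set_eqI, rule iffI)
  fix i assume "i \<in> outer (star g)"
  then have i: "0 < i" "is_vert (star g) (i - 1)" by (auto simp: outer_def)
  then obtain j where "is_vert g j" "i - 1 = pos g j" using star_vert by blast
  then show "i \<in> (\<lambda>k. pos g k + 1) ` {k. is_vert g k}" using i(1)
    by (intro image_eqI[of _ _ j]) auto
next
  fix i assume "i \<in> (\<lambda>k. pos g k + 1) ` {k. is_vert g k}"
  then obtain k where k: "is_vert g k" "i = pos g k + 1" by blast
  have "is_vert (star g) (pos g k)" using k star_vert by blast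
  moreover have "is_horiz (star g) (pos g k + 1)" using k star_horiz by blast
  ultimately show "i \<in> outer (star g)" using k by (simp add: outer_def)
qed

lemma finU: "finite {k. is_vert g k}"
  by (rule finite_subset[of _ "{..<length g}"]) (auto simp: is_vert_def)

lemma sum_outer: "(\<Sum>p\<in>outer (star g). int (kval (m + n) n (star g) p)) =
   (\<Sum>k\<in>{k. is_vert g k}. int (card (S1 k) + card (S2 k)))"
proof -
  have inj: "inj_on (\<lambda>k. pos g k + 1) {k. is_vert g k}" by (rule inj_onI) (rule pos_inj, simp)
  show ?thesis unfolding outer_star sum.reindex[OF inj] using kval_star by (simp add: comp_def)
qed

lemma Une: "{k. is_vert g k} \<noteq> {}"
proof -
  have "filter id g \<noteq> []" using lenn npos by auto
  then obtain x where "x \<in> set g" "x" by (auto simp: filter_empty_conv)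
  then obtain k where "k < length g" "g ! k" by (metis in_set_conv_nth)
  then show ?thesis by (auto simp: is_vert_def)
qed

lemma max_bound: assumes k: "is_vert g k" "\<forall>k'. is_vert g k' \<longrightarrow> L k' \<le> L k"
  shows "t \<le> length g \<Longrightarrow> L t \<le> L k + int m"
proof (induction t)
  case 0
  then show ?case using L0 L_nonneg[of k] k by (simp add: is_vert_def)
next
  case (Suc t)
  then have IH: "L t \<le> L k + int m" by simp
  show ?case
  proof (cases "g ! t")
    case True
    then have "is_vert g t" using Suc by (simp add: is_vert_def)
    then show ?thesis using L_SucU k by fastforce
  next
    case False
    then have "is_horiz g t" using Suc by (simp add: is_horiz_def)
    then show ?thesis using L_SucD IH by simp
  qed
qed

lemma S_max_empty: assumes k: "is_vert g k" "\<forall>k'. is_vert g k' \<longrightarrow> L k' \<le> L k"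
  shows "card (S1 k) + card (S2 k) = 0"
proof -
  have "S1 k = {}"
  proof (rule ccontr)
    assume "S1 k \<noteq> {}"
    then obtain i where i: "is_horiz g i" "L k + int m + int n \<le> L i" by (auto simp: S1_def)
    have "L i \<le> L k + int m" using max_bound[OF k, of i] i by (simp add: is_horiz_def)
    then show False using i npos by simp
  qed
  moreover have "S2 k = {}"
  proof (rule ccontr)
    assume "S2 k \<noteq> {}"
    then obtain k' where i: "is_vert g k'" "k' \<noteq> k" "L k \<le> L k'" by (auto simp: S2_def)
    then have "L k' = L k" using k by force
    then have "k' = k" using F1 i k by (simp add: is_vert_def)
    then show False using i by simp
  qed
  ultimately show ?thesis by simp
qed

lemma dlevel_lv: "dlevel a b w i = real_of_int (lv a b w i)"
  by (simp add: dlevel_def lv_def)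

lemma sum_V: "(\<Sum>p\<in>Vset (m + n) n (star g). int (kval (m + n) n (star g) p)) =
   (\<Sum>k\<in>{k. is_vert g k}. int (card (S1 k) + card (S2 k)))"
proof -
  define U where "U = {k. is_vert g k}"
  have "finite (L ` U)" "L ` U \<noteq> {}" using finU Une by (auto simp: U_def)
  then have "Max (L ` U) \<in> L ` U" by (rule Max_in)
  then obtain k0 where k0: "k0 \<in> U" "L k0 = Max (L ` U)" by auto
  have k0max: "\<forall>k\<in>U. L k \<le> L k0" using k0 finU by (simp add: U_def)
  have po: "p0 (m + n) n (star g) \<in> outer (star g) \<and>
     (\<exists>k\<in>U. p0 (m + n) n (star g) = pos g k + 1 \<and> (\<forall>k'\<in>U. L k' \<le> L k))"
    unfolding p0_def
  proof (rule arg_maxI[where x = "pos g k0 + 1"])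
    show "pos g k0 + 1 \<in> outer (star g)" using k0 outer_star by (auto simp: U_def)
  next
    fix y assume "y \<in> outer (star g)"
    then obtain k where k: "k \<in> U" "y = pos g k + 1" using outer_star by (auto simp: U_def)
    have "LS y \<le> LS (pos g k0 + 1)" using k k0 k0max LSp1 by (simp add: U_def)
    then show "\<not> dlevel (m + n) n (star g) y > dlevel (m + n) n (star g) (pos g k0 + 1)"
      by (simp add: dlevel_lv)
  next
    fix x assume x: "x \<in> outer (star g)" "\<forall>y. y \<in> outer (star g) \<longrightarrow> \<not> dlevel (m + n) n (star g) y > dlevel (m + n) n (star g) x"
    then obtain k where k: "k \<in> U" "x = pos g k + 1" using outer_star by (auto simp: U_def)
    have "\<forall>k'\<in>U. L k' \<le> L k"
    proof
      fix k' assume k': "k' \<in> U"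
      then have "pos g k' + 1 \<in> outer (star g)" using outer_star by (auto simp: U_def)
      then have "\<not> dlevel (m + n) n (star g) (pos g k' + 1) > dlevel (m + n) n (star g) x" using x by blast
      then have "\<not> LS (pos g k' + 1) > LS (pos g k + 1)" using k by (simp add: dlevel_lv)
      then show "L k' \<le> L k" using k k' LSp1 by (simp add: U_def)
    qed
    then show "x \<in> outer (star g) \<and> (\<exists>k\<in>U. x = pos g k + 1 \<and> (\<forall>k'\<in>U. L k' \<le> L k))" using x k by blast
  qed
  then obtain k where k: "k \<in> U" "p0 (m + n) n (star g) = pos g k + 1" "\<forall>k'\<in>U. L k' \<le> L k" by blast
  have z: "kval (m + n) n (star g) (p0 (m + n) n (star g)) = 0"
    using k kval_star S_max_empty by (simp add: U_def)
  have fo: "finite (outer (star g))" using outer_star finU by simp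
  show ?thesis unfolding Vset_def using sum_diff1[OF fo, of "\<lambda>p. int (kval (m + n) n (star g) p)"] po z sum_outer
    by simp
qed

definition "A2 = {(i,j). i<j \<and> is_horiz g i \<and> is_vert g j \<and> L j + int m + int n < L i \<and> L i \<le> L j + int m + 2 * int n}"
definition "Qk k = {j. is_vert g j \<and> k < j \<and> L j \<le> L k + int m + int n \<and> L k + int m + int n \<le> L j + int m}"

lemma card_split: "finite A \<Longrightarrow> card A = card {x\<in>A. P x} + card {x\<in>A. \<not> P x}"
proof -
  assume f: "finite A"
  have "A = {x\<in>A. P x} \<union> {x\<in>A. \<not> P x}" by auto
  then have "card A = card ({x\<in>A. P x} \<union> {x\<in>A. \<not> P x})" by simp
  also have "\<dots> = card {x\<in>A. P x} + card {x\<in>A. \<not> P x}"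
    by (rule card_Un_disjoint) (use f in auto)
  finally show ?thesis .
qed

lemma finA2: "finite A2"
  by (rule finite_subset[OF _ fin_pairs]) (auto simp: A2_def is_horiz_def is_vert_def)

lemma AA_split: "card AA = hstat m n g + card A2"
proof -
  have "card AA = card {x\<in>AA. case x of (i,j) \<Rightarrow> L i \<le> L j + int m + int n} + card {x\<in>AA. \<not> (case x of (i,j) \<Rightarrow> L i \<le> L j + int m + int n)}"
    by (rule card_split[OF finAA])
  moreover have "{x\<in>AA. case x of (i,j) \<Rightarrow> L i \<le> L j + int m + int n} = Hset m n g"
    unfolding Hset_lv AA_def by auto
  moreover have "{x\<in>AA. \<not> (case x of (i,j) \<Rightarrow> L i \<le> L j + int m + int n)} = A2"
    unfolding A2_def AA_def by auto
  ultimately show ?thesis by (simp add: hstat_def)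
qed

lemma crossing_k: assumes k: "is_vert g k" shows "card {i\<in>S1 k. k < i} = card (Qk k)"
proof -
  define X where "X = L k + int m + int n"
  have klt: "k < length g" using k by (simp add: is_vert_def)
  have ne: "\<forall>t. Suc k \<le> t \<and> t \<le> length g \<longrightarrow> L t \<noteq> X"
    using F2 klt by (simp add: X_def add.assoc)
  have c: "card {t\<in>{Suc k..<length g}. L t < X \<and> X < L (Suc t)} + (if X < L (Suc k) then 1 else 0) =
         card {t\<in>{Suc k..<length g}. L (Suc t) < X \<and> X < L t} + (if X < L (length g) then 1 else 0)"
    using crossing[OF _ ne] klt by simp
  have "L (Suc k) = L k + int m" using L_SucU[OF k] .
  then have c1: "\<not> X < L (Suc k)" using npos by (simp add: X_def)
  have "0 \<le> L k" using L_nonneg klt by simp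
  then have c2: "\<not> X < L (length g)" using LN mpos by (simp add: X_def)
  have e1: "{t\<in>{Suc k..<length g}. L t < X \<and> X < L (Suc t)} = Qk k"
  proof (rule set_eqI)
    fix t
    show "t \<in> {t\<in>{Suc k..<length g}. L t < X \<and> X < L (Suc t)} \<longleftrightarrow> t \<in> Qk k"
    proof (cases "t < length g")
      case True
      have n1: "L t \<noteq> X" "L (Suc t) \<noteq> X" if "k < t" using ne that True by auto
      show ?thesis
      proof (cases "g ! t")
        case gt: True
        then have v: "is_vert g t" using True by (simp add: is_vert_def)
        have "L (Suc t) = L t + int m" using L_SucU[OF v] .
        then show ?thesis using v n1 True unfolding Qk_def by (auto simp: X_def)
      next
        case gt: False
        then have v: "is_horiz g t" "\<not> is_vert g t" using True by (auto simp: is_vert_def is_horiz_def)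
        have "L (Suc t) = L t - int n" using L_SucD[OF v(1)] .
        then show ?thesis using v npos unfolding Qk_def by auto
      qed
    next
      case False
      then show ?thesis unfolding Qk_def by (auto simp: is_vert_def)
    qed
  qed
  have e2: "{t\<in>{Suc k..<length g}. L (Suc t) < X \<and> X < L t} = {i\<in>S1 k. k < i}"
  proof (rule set_eqI)
    fix t
    show "t \<in> {t\<in>{Suc k..<length g}. L (Suc t) < X \<and> X < L t} \<longleftrightarrow> t \<in> {i\<in>S1 k. k < i}"
    proof (cases "t < length g")
      case True
      have n1: "L t \<noteq> X" "L (Suc t) \<noteq> X" if "k < t" using ne that True by auto
      show ?thesis
      proof (cases "g ! t")
        case gt: True
        then have v: "is_vert g t" "\<not> is_horiz g t" using True by (auto simp: is_vert_def is_horiz_def)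
        have "L (Suc t) = L t + int m" using L_SucU[OF v(1)] .
        then show ?thesis using v unfolding S1_def by auto
      next
        case gt: False
        then have v: "is_horiz g t" using True by (auto simp: is_horiz_def)
        have "L (Suc t) = L t - int n" using L_SucD[OF v(1)] .
        then show ?thesis using v n1 True unfolding S1_def by (auto simp: X_def)
      qed
    next
      case False
      then show ?thesis unfolding S1_def by (auto simp: is_horiz_def)
    qed
  qed
  show ?thesis using c c1 c2 e1 e2 by simp
qed

lemma swap_card: "B = (\<lambda>(i,j). (j,i)) ` A \<Longrightarrow> card B = card A"
proof -
  assume "B = (\<lambda>(i,j). (j,i)) ` A"
  moreover have "inj_on (\<lambda>(i,j). (j,i)) A" by (rule inj_onI) auto
  ultimately show ?thesis by (simp add: card_image)
qed

lemma finSig: "finite (Sigma {k. is_vert g k} F)" if "\<And>k. finite (F k)" for F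
  using finU that by (rule finite_SigmaI)

lemma sumS1: "(\<Sum>k\<in>{k. is_vert g k}. card (S1 k)) = card A2 + (\<Sum>k\<in>{k. is_vert g k}. card (Qk k))"
proof -
  define U where "U = {k. is_vert g k}"
  have fU: "finite U" using finU by (simp add: U_def)
  have "(\<Sum>k\<in>U. card (S1 k)) = card (Sigma U S1)" using fU finS1 by simp
  also have "\<dots> = card {x\<in>Sigma U S1. case x of (k,i) \<Rightarrow> i < k} + card {x\<in>Sigma U S1. \<not> (case x of (k,i) \<Rightarrow> i < k)}"
    by (rule card_split) (use fU finS1 in auto)
  also have "card {x\<in>Sigma U S1. case x of (k,i) \<Rightarrow> i < k} = card A2"
  proof (rule swap_card, rule set_eqI, rule iffI)
    fix x assume x: "x \<in> {x\<in>Sigma U S1. case x of (k,i) \<Rightarrow> i < k}"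
    obtain k i where xs: "x = (k,i)" by (cases x)
    have a: "is_vert g k" "is_horiz g i" "i < k" "L i - int n \<le> L k + int m + int n" "L k + int m + int n \<le> L i"
      using x xs by (auto simp: U_def S1_def)
    have "L i \<noteq> L k + int (m + n)" using F2[of i k] a by (simp add: is_vert_def is_horiz_def)
    then have "(i,k) \<in> A2" using a by (auto simp: A2_def)
    then show "x \<in> (\<lambda>(i,j). (j,i)) ` A2" using xs by (auto intro!: image_eqI[of _ _ "(i,k)"])
  next
    fix x assume "x \<in> (\<lambda>(i,j). (j,i)) ` A2"
    then obtain i k where xs: "x = (k,i)" "(i,k) \<in> A2" by auto
    then show "x \<in> {x\<in>Sigma U S1. case x of (k,i) \<Rightarrow> i < k}" by (auto simp: A2_def U_def S1_def)
  qed
  also have "{x\<in>Sigma U S1. \<not> (case x of (k,i) \<Rightarrow> i < k)} = Sigma U (\<lambda>k. {i\<in>S1 k. k < i})"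
  proof (rule set_eqI)
    fix x :: "nat \<times> nat"
    obtain k i where xs: "x = (k,i)" by (cases x)
    have "k \<in> U \<Longrightarrow> i \<in> S1 k \<Longrightarrow> i \<noteq> k" using hv_excl by (auto simp: U_def S1_def)
    then show "x \<in> {x\<in>Sigma U S1. \<not> (case x of (k,i) \<Rightarrow> i < k)} \<longleftrightarrow> x \<in> Sigma U (\<lambda>k. {i\<in>S1 k. k < i})"
      using xs by auto
  qed
  also have "card (Sigma U (\<lambda>k. {i\<in>S1 k. k < i})) = (\<Sum>k\<in>U. card {i\<in>S1 k. k < i})"
    using fU finS1 by simp
  also have "\<dots> = (\<Sum>k\<in>U. card (Qk k))"
    by (rule sum.cong) (auto simp: U_def crossing_k)
  finally show ?thesis by (simp add: U_def)
qed

lemma finQk: "finite (Qk k)"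
  by (rule finite_subset[of _ "{..<length g}"]) (auto simp: Qk_def is_vert_def)

lemma BB_count: "card BB = (\<Sum>k\<in>{k. is_vert g k}. card (Qk k)) + (\<Sum>k\<in>{k. is_vert g k}. card (S2 k))"
proof -
  define U where "U = {k. is_vert g k}"
  have fU: "finite U" using finU by (simp add: U_def)
  have s1: "(\<Sum>k\<in>U. card (Qk k)) = card (Sigma U Qk)" using fU finQk by simp
  have s2: "(\<Sum>k\<in>U. card (S2 k)) = card (Sigma U S2)" using fU finS2 by simp
  define Bl where "Bl = {x\<in>BB. \<not> (case x of (k,j) \<Rightarrow> L k + int n \<le> L j)}"
  have "card BB = card {x\<in>BB. case x of (k,j) \<Rightarrow> L k + int n \<le> L j} + card Bl"
    unfolding Bl_def by (rule card_split[OF finBB])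
  moreover have "{x\<in>BB. case x of (k,j) \<Rightarrow> L k + int n \<le> L j} = Sigma U Qk"
    by (auto simp: BB_def U_def Qk_def)
  moreover have "card Bl = card (Sigma U S2)"
  proof -
    have fBl: "finite Bl" using finBB by (simp add: Bl_def)
    have fR: "finite (Sigma U S2)" using fU finS2 by simp
    have "card Bl = card {x\<in>Bl. case x of (k,j) \<Rightarrow> L k \<le> L j} + card {x\<in>Bl. \<not> (case x of (k,j) \<Rightarrow> L k \<le> L j)}"
      by (rule card_split[OF fBl])
    moreover have "card (Sigma U S2) = card {x\<in>Sigma U S2. case x of (a,b) \<Rightarrow> a < b} + card {x\<in>Sigma U S2. \<not> (case x of (a,b) \<Rightarrow> a < b)}"
      by (rule card_split[OF fR])
    moreover have "{x\<in>Bl. case x of (k,j) \<Rightarrow> L k \<le> L j} = {x\<in>Sigma U S2. case x of (a,b) \<Rightarrow> a < b}"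
    proof (rule set_eqI)
      fix x :: "nat \<times> nat"
      obtain a b where xs: "x = (a,b)" by (cases x)
      have F: "is_vert g a \<Longrightarrow> is_vert g b \<Longrightarrow> L b \<noteq> L a + int n"
      proof
        assume v: "is_vert g a" "is_vert g b" "L b = L a + int n"
        have "L (Suc b) = L a + int (m + n)" using L_SucU[OF v(2)] v(3) by simp
        then show False using F2[of "Suc b" a] v by (simp add: is_vert_def)
      qed
      show "x \<in> {x\<in>Bl. case x of (k,j) \<Rightarrow> L k \<le> L j} \<longleftrightarrow> x \<in> {x\<in>Sigma U S2. case x of (a,b) \<Rightarrow> a < b}"
        using xs F by (auto simp: Bl_def BB_def U_def S2_def)
    qed
    moreover have "card {x\<in>Bl. \<not> (case x of (k,j) \<Rightarrow> L k \<le> L j)} = card {x\<in>Sigma U S2. \<not> (case x of (a,b) \<Rightarrow> a < b)}"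
    proof (rule sym, rule swap_card, rule set_eqI, rule iffI)
      fix x assume x: "x \<in> {x\<in>Sigma U S2. \<not> (case x of (a,b) \<Rightarrow> a < b)}"
      obtain a b where xs: "x = (a,b)" by (cases x)
      have v: "is_vert g a" "is_vert g b" "b \<noteq> a" "\<not> a < b" "L b \<le> L a + int n" "L a \<le> L b"
        using x xs by (auto simp: U_def S2_def)
      have "L a \<noteq> L b" using F1[of a b] v by (auto simp: is_vert_def)
      then have "(b,a) \<in> {x\<in>Bl. \<not> (case x of (k,j) \<Rightarrow> L k \<le> L j)}"
        using v by (auto simp: Bl_def BB_def)
      then show "x \<in> (\<lambda>(i,j). (j,i)) ` {x\<in>Bl. \<not> (case x of (k,j) \<Rightarrow> L k \<le> L j)}"
        using xs by (auto intro!: image_eqI[of _ _ "(b,a)"])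
    next
      fix x assume "x \<in> (\<lambda>(i,j). (j,i)) ` {x\<in>Bl. \<not> (case x of (k,j) \<Rightarrow> L k \<le> L j)}"
      then obtain a b where xs: "x = (a,b)" "(b,a) \<in> Bl" "\<not> L b \<le> L a" by auto
      then show "x \<in> {x\<in>Sigma U S2. \<not> (case x of (a,b) \<Rightarrow> a < b)}"
        by (auto simp: Bl_def BB_def U_def S2_def)
    qed
    ultimately show ?thesis by simp
  qed
  ultimately show ?thesis using s1 s2 by (simp add: U_def)
qed

lemma main_count: "(\<Sum>k\<in>{k. is_vert g k}. int (card (S1 k) + card (S2 k))) = int (card A2 + card BB)"
proof -
  have "(\<Sum>k\<in>{k. is_vert g k}. int (card (S1 k) + card (S2 k))) =
     int (\<Sum>k\<in>{k. is_vert g k}. card (S1 k) + card (S2 k))" by simp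
  also have "(\<Sum>k\<in>{k. is_vert g k}. card (S1 k) + card (S2 k)) = card A2 + card BB"
    using sumS1 BB_count by (simp add: sum.distrib)
  finally show ?thesis .
qed

theorem final: "int (hstat m n g) = int (hstat (m + n) n (star g))
   - (\<Sum>i\<in>Vset (m + n) n (star g). int (kval (m + n) n (star g) i))"
  using sum_V main_count hS AA_split by simp

end

theorem mainTheorem7:
  fixes m n :: nat and \<gamma> :: "bool list"
  assumes "0 < m" and "0 < n" and "coprime m n"
    and "\<gamma> \<in> dyck m n"
  shows "int (hstat m n \<gamma>) =
           int (hstat (m + n) n (star \<gamma>))
           - (\<Sum>i\<in>Vset (m + n) n (star \<gamma>). int (kval (m + n) n (star \<gamma>) i))"
  by (rule final[OF assms])

end
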